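(* Let $k\ge2$ and let $p_1,\dots,p_k$ be distinct primes, $n=p_1\cdots p_k$. Then $$\Phi_{n}(x)=f(x)\cdot\prod_{j=1}^{k-2}P_j(x),$$ where $$f(x)=(1-x^{n})\cdot\frac{\prod_{i=2}^k\big(1-x^{p_2\cdots p_k/p_i}\big)}{\prod_{i=1}^k\big(1-x^{n/p_i}\big)}\qquad\text{and}\qquad P_j(x)=\prod_{i=j+2}^k\Phi_{p_1\cdots p_j}\big(x^{p_{j+2}\cdots p_k/p_i}\big).$$
   Context: $\Phi_m$ denotes the $m$-th cyclotomic polynomial. In the exponents, $p_2\cdots p_k/p_i$ means the product $p_2p_3\cdots p_k$ divided by $p_i$, and $p_{j+2}\cdots p_k/p_i$ means the product $p_{j+2}\cdots p_k$ divided by $p_i$. Empty products equal $1$. *)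

theory Defs
  imports Complex_Main "HOL-Computational_Algebra.Computational_Algebra"
begin

definition cyclotomic :: "nat \<Rightarrow> complex poly" where
  "cyclotomic m = (\<Prod>k\<in>{k\<in>{1..m}. coprime k m}. [:- cis (2 * pi * real k / real m), 1:])"

abbreviation X_pow :: "nat \<Rightarrow> complex poly" where
  "X_pow e \<equiv> monom 1 e"

end

theory Submission
  imports Defs
begin

lemma roots_prod:
  fixes w :: "nat \<Rightarrow> complex"
  assumes n: "n > 0" and inj: "inj_on w {..<n}" and r: "\<And>t. t < n \<Longrightarrow> w t ^ n = c"
  shows "monom 1 n - [:c:] = (\<Prod>t<n. [:- w t, 1:])"
proof (rule ccontr)
  define R where "R = (\<Prod>t<n. [:- w t, 1:])"
  define D where "D = monom 1 n - [:c:] - R"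
  assume ne: "monom 1 n - [:c:] \<noteq> (\<Prod>t<n. [:- w t, 1:])"
  hence D0: "D \<noteq> 0" by (simp add: D_def R_def)
  have degR: "degree R = n"
    unfolding R_def by (subst degree_prod_eq_sum_degree) auto
  have lcR: "lead_coeff R = 1"
    unfolding R_def by (simp add: lead_coeff_prod)
  have cR: "coeff R n = 1" using degR lcR by simp
  have "degree D \<le> n"
    unfolding D_def using degR n
    by (intro degree_diff_le) (auto simp: degree_monom_eq)
  moreover have "coeff D n = 0" using cR n by (cases n) (simp_all add: D_def coeff_monom)
  ultimately have dD: "degree D < n" using D0
    by (metis le_neq_implies_less leading_coeff_0_iff)
  have "w ` {..<n} \<subseteq> {x. poly D x = 0}"
  proof
    fix x assume "x \<in> w ` {..<n}"
    then obtain t where t: "t < n" "x = w t" by auto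
    have "poly R x = 0" unfolding R_def using t
      by (auto simp: poly_prod intro!: prod_zero bexI[of _ t])
    thus "x \<in> {x. poly D x = 0}" using r[OF t(1)] t by (simp add: D_def poly_monom)
  qed
  hence "card (w ` {..<n}) \<le> card {x. poly D x = 0}"
    by (intro card_mono poly_roots_finite D0)
  also have "\<dots> \<le> degree D" by (rule card_poly_roots_bound[OF D0])
  finally show False using dD card_image[OF inj] by simp
qed

lemma cis_pow: "N > 0 \<Longrightarrow> cis (2*pi*real b/real N) = cis (2*pi/real N) ^ b"
  by (simp only: DeMoivre) (simp add: field_simps)

lemma cis_root1: "N > 0 \<Longrightarrow> cis (2*pi/real N) ^ N = 1"
  by (simp only: DeMoivre) simp

lemma pow_mod: "(z::complex) ^ N = 1 \<Longrightarrow> z ^ b = z ^ (b mod N)"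
proof -
  assume "z ^ N = 1"
  have "z ^ b = z^(b mod N) * (z^N)^(b div N)" by (metis mod_mult_div_eq power_add power_mult)
  thus ?thesis using \<open>z ^ N = 1\<close> by simp
qed

lemma mod_eq_range: "0 < x \<Longrightarrow> x \<le> N \<Longrightarrow> 0 < y \<Longrightarrow> y \<le> N \<Longrightarrow> x mod N = y mod N \<Longrightarrow> (x::nat) = y"
  by (cases "x = N"; cases "y = N") auto

lemma cis_inj:
  assumes N: "N > 0" and x: "0 < x" "x \<le> N" and y: "0 < y" "y \<le> N"
    and e: "cis (2*pi*real x/real N) = cis (2*pi*real y/real N)"
  shows "x = y"
proof -
  define z where "z = cis (2*pi/real N)"
  have zN: "z ^ N = 1" using N by (simp add: z_def cis_root1)
  have "cis (2*pi*real (x mod N)/real N) = z ^ (x mod N)" using N by (simp add: z_def cis_pow)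
  also have "\<dots> = z ^ x" using pow_mod[OF zN] by simp
  also have "\<dots> = cis (2*pi*real x/real N)" using N by (simp add: z_def cis_pow)
  also note e
  also have "cis (2*pi*real y/real N) = z ^ y" using N by (simp add: z_def cis_pow)
  also have "\<dots> = z ^ (y mod N)" using pow_mod[OF zN] by simp
  also have "\<dots> = cis (2*pi*real (y mod N)/real N)" using N by (simp add: z_def cis_pow)
  finally have "x mod N = y mod N"
    using bij_betw_roots_unity[OF N] N unfolding bij_betw_def inj_on_def by auto
  thus ?thesis using mod_eq_range x y by blast
qed

lemma cop_shift: "coprime (a + m*t) m = coprime a (m::nat)"
  by (metis add.commute coprime_iff_gcd_eq_1 gcd.commute gcd_add_mult mult.commute)

lemma pcompose_lin: "pcompose [:c, 1:] q = q + [:c::complex:]"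
  by (simp add: pcompose_pCons add.commute smult_1_left)

lemma cyc_rel:
  assumes m: "m > 0" and p: "prime p" and nd: "\<not> p dvd m"
  shows "cyclotomic (m*p) * cyclotomic m = pcompose (cyclotomic m) (monom 1 p)"
proof -
  define A where "A = {a\<in>{1..m}. coprime a m}"
  define g where "g b = [:- cis (2*pi*real b/real (m*p)), 1:]" for b
  define B where "B = {b\<in>{1..m*p}. coprime b m}"
  define C where "C = {b\<in>{1..m*p}. coprime b (m*p)}"
  have p0: "p > 0" using p prime_gt_0_nat by blast
  have mp0: "m*p > 0" using m p0 by simp
  have cop: "coprime p m" using p nd prime_imp_coprime by blast
  define z where "z = cis (2*pi/real (m*p))"
  have zN: "z ^ (m*p) = 1" unfolding z_def by (rule cis_root1[OF mp0])
  have gz: "g b = [:-(z ^ b), 1:]" for b by (simp only: g_def z_def cis_pow[OF mp0])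
  have zp: "z ^ (p * a) = cis (2*pi*real a/real m)" for a
  proof -
    have "z ^ (p*a) = cis (2*pi*real (p*a)/real (m*p))" by (simp only: z_def cis_pow[OF mp0])
    also have "2*pi*real (p*a)/real (m*p) = 2*pi*real a/real m" using p0 by (simp add: field_simps)
    finally show ?thesis .
  qed
  have step1: "pcompose (cyclotomic m) (monom 1 p) = (\<Prod>a\<in>A. monom 1 p - [:cis (2*pi*real a/real m):])"
    unfolding cyclotomic_def A_def pcompose_prod
    by (intro prod.cong refl) (simp add: pcompose_lin)
  have step2: "monom 1 p - [:cis (2*pi*real a/real m):] = (\<Prod>t<p. g (a + m*t))" if a: "a \<in> A" for a
  proof -
    have a1: "1 \<le> a" "a \<le> m" using a by (auto simp: A_def)
    have "monom 1 p - [:cis (2*pi*real a/real m):] = (\<Prod>t<p. [:- (z ^ (a + m*t)), 1:])"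
    proof (rule roots_prod[OF p0])
      show "inj_on (\<lambda>t. z ^ (a + m * t)) {..<p}"
      proof (rule inj_onI)
        fix t t' assume t: "t \<in> {..<p}" "t' \<in> {..<p}" and e: "z ^ (a + m*t) = z ^ (a + m*t')"
        have "m * Suc t \<le> m * p" using t mult_le_mono2[of "Suc t" p m] by simp
        moreover have "m * Suc t' \<le> m * p" using t mult_le_mono2[of "Suc t'" p m] by simp
        ultimately have b1: "a + m*t \<le> m*p" "a + m*t' \<le> m*p" using a1 by auto
        have "a + m*t = a + m*t'"
        proof (rule cis_inj[OF mp0])
          show "cis (2*pi*real (a + m*t)/real (m*p)) = cis (2*pi*real (a + m*t')/real (m*p))"
            using e by (simp only: z_def cis_pow[OF mp0])
        qed (use a1 b1 in auto)
        thus "t = t'" using m by simp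
      qed
    next
      fix t assume "t < p"
      have "(z ^ (a + m*t)) ^ p = z ^ (p*a + (m*p)*t)"
        by (simp only: power_mult[symmetric]) (simp add: algebra_simps)
      also have "\<dots> = z ^ (p*a) * (z ^ (m*p)) ^ t"
        by (simp only: power_add power_mult)
      also have "\<dots> = cis (2*pi*real a/real m)" using zN zp by simp
      finally show "(z ^ (a + m*t)) ^ p = cis (2*pi*real a/real m)" .
    qed
    thus ?thesis by (simp add: gz)
  qed
  have step3: "(\<Prod>a\<in>A. \<Prod>t<p. g (a + m*t)) = prod g B"
  proof -
    have bij: "bij_betw (\<lambda>(a,t). a + m*t) (A \<times> {..<p}) B"
      unfolding bij_betw_def
    proof
      show "inj_on (\<lambda>(a,t). a + m*t) (A \<times> {..<p})"
      proof (rule inj_onI, clarify)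
        fix a t a' t' assume a: "a \<in> A" "a' \<in> A" and e: "a + m*t = a' + m*t'"
        have a1: "1 \<le> a" "a \<le> m" "1 \<le> a'" "a' \<le> m" using a by (auto simp: A_def)
        have e2: "(a - 1) + m*t = (a' - 1) + m*t'" using e a1 by simp
        have l1: "a - 1 < m" "a' - 1 < m" using a1 by auto
        have "(a - 1) = ((a - 1) + m*t) mod m" by (simp only: mod_mult_self2 mod_less[OF l1(1)])
        also have "\<dots> = ((a' - 1) + m*t') mod m" using e2 by (simp only:)
        also have "\<dots> = a' - 1" by (simp only: mod_mult_self2 mod_less[OF l1(2)])
        finally have "a = a'" using a1 by simp
        moreover have "t = t'" using e \<open>a = a'\<close> m by simp
        ultimately show "a = a' \<and> t = t'" by simp
      qed
    next
      show "(\<lambda>(a,t). a + m*t) ` (A \<times> {..<p}) = B"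
      proof (rule set_eqI, rule iffI)
        fix b assume "b \<in> (\<lambda>(a,t). a + m*t) ` (A \<times> {..<p})"
        then obtain a t where at: "a \<in> A" "t < p" "b = a + m*t" by auto
        have a1: "1 \<le> a" "a \<le> m" "coprime a m" using at by (auto simp: A_def)
        have "m * Suc t \<le> m * p" using at mult_le_mono2[of "Suc t" p m] by simp
        hence "b \<le> m*p" using a1 at by simp
        moreover have "coprime b m" using a1 at by (simp add: cop_shift)
        ultimately show "b \<in> B" using a1 at by (simp add: B_def)
      next
        fix b assume b: "b \<in> B"
        hence b1: "1 \<le> b" "b \<le> m*p" "coprime b m" by (auto simp: B_def)
        define a where "a = (b - 1) mod m + 1"
        define t where "t = (b - 1) div m"
        have eq: "b = a + m*t" using b1 by (simp add: a_def t_def)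
        have "a \<le> m" using m by (simp add: a_def Suc_leI)
        moreover have "t < p" using b1 m unfolding t_def
          by (simp add: less_mult_imp_div_less div_less_iff_less_mult mult.commute)
        moreover have "coprime a m" using b1 eq cop_shift by metis
        ultimately have "(a, t) \<in> A \<times> {..<p}" by (simp add: A_def a_def)
        thus "b \<in> (\<lambda>(a,t). a + m*t) ` (A \<times> {..<p})" using eq by force
      qed
    qed
    have "(\<Prod>a\<in>A. \<Prod>t<p. g (a + m*t)) = (\<Prod>(a,t)\<in>A \<times> {..<p}. g (a + m*t))"
      by (rule prod.cartesian_product)
    also have "\<dots> = (\<Prod>x\<in>A \<times> {..<p}. g ((\<lambda>(a,t). a + m*t) x))"
      by (simp add: case_prod_beta)
    also have "\<dots> = prod g B" by (rule prod.reindex_bij_betw[OF bij])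
    finally show ?thesis .
  qed
  have step4: "prod g B = cyclotomic (m*p) * cyclotomic m"
  proof -
    define D where "D = (\<lambda>c. p*c) ` A"
    have BCD: "B = C \<union> D"
    proof (rule set_eqI, rule iffI)
      fix b assume "b \<in> B"
      hence b1: "1 \<le> b" "b \<le> m*p" "coprime b m" by (auto simp: B_def)
      show "b \<in> C \<union> D"
      proof (cases "p dvd b")
        case True
        then obtain c where c: "b = p*c" by blast
        have "1 \<le> c" using b1 c by (cases c) auto
        moreover have "c \<le> m" using b1 c p0 by (simp add: mult.commute)
        moreover have "coprime c m" using b1 c by simp
        ultimately show ?thesis using c by (auto simp: D_def A_def)
      next
        case False
        hence "coprime b p" using p prime_imp_coprime coprime_commute by blast
        thus ?thesis using b1 by (simp add: C_def)
      qed
    next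
      fix b assume "b \<in> C \<union> D"
      thus "b \<in> B"
      proof
        assume "b \<in> C" thus ?thesis by (simp add: C_def B_def)
      next
        assume "b \<in> D"
        then obtain c where c: "c \<in> A" "b = p*c" by (auto simp: D_def)
        hence c1: "1 \<le> c" "c \<le> m" "coprime c m" by (auto simp: A_def)
        have "p*c \<le> m*p" using c1 by (simp add: mult.commute)
        thus ?thesis using c c1 cop p0 by (simp add: B_def)
      qed
    qed
    have disj: "C \<inter> D = {}"
    proof -
      { fix b assume "b \<in> C" "b \<in> D"
        then obtain c where "b = p*c" "coprime b (m*p)" by (auto simp: C_def D_def)
        hence "coprime p p" by simp
        hence False using p by simp }
      thus ?thesis by blast
    qed
    have fin: "finite C" "finite D" by (auto simp: C_def D_def A_def)
    have "prod g B = prod g C * prod g D" using BCD disj fin by (simp add: prod.union_disjoint)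
    moreover have "prod g C = cyclotomic (m*p)" by (simp add: cyclotomic_def g_def C_def)
    moreover have "prod g D = cyclotomic m"
    proof -
      have "prod g D = (\<Prod>c\<in>A. g (p*c))" unfolding D_def
        by (subst prod.reindex) (use p0 in \<open>auto simp: inj_on_def\<close>)
      also have "\<dots> = cyclotomic m" unfolding cyclotomic_def A_def
        by (intro prod.cong refl) (simp only: gz zp)
      finally show ?thesis .
    qed
    ultimately show ?thesis by simp
  qed
  show ?thesis using step1 step2 step3 step4 by simp
qed

definition Cyc :: "nat \<Rightarrow> nat \<Rightarrow> complex poly" where
  "Cyc m e = pcompose (cyclotomic m) (monom 1 e)"

lemma monom_comp: "pcompose (monom (1::complex) a) (monom 1 b) = monom 1 (a*b)"
proof -
  have "pcompose ([:0,1::complex:] ^ a) q = q ^ a" for q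
  proof (induction a)
    case (Suc a)
    have x: "pcompose [:0,1::complex:] q = q" by (simp add: pcompose_pCons)
    show ?case by (simp only: power_Suc pcompose_mult Suc x)
  qed (simp add: pcompose_1)
  thus ?thesis by (simp add: monom_altdef[of 1 a] monom_power mult.commute)
qed

lemma Cyc_comp: "pcompose (Cyc m a) (monom 1 b) = Cyc m (a*b)"
  by (simp add: Cyc_def pcompose_assoc[symmetric] monom_comp)

lemma Cyc_1: "Cyc m 1 = cyclotomic m"
proof -
  have "monom (1::complex) 1 = [:0,1:]" by (simp add: monom_altdef)
  thus ?thesis by (simp add: Cyc_def)
qed

lemma Cyc_rel:
  assumes "m > 0" "prime p" "\<not> p dvd m"
  shows "Cyc (m*p) e * Cyc m e = Cyc m (p*e)"
proof -
  have "pcompose (cyclotomic (m*p) * cyclotomic m) (monom 1 e) = pcompose (pcompose (cyclotomic m) (monom 1 p)) (monom 1 e)"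
    using cyc_rel[OF assms] by simp
  thus ?thesis by (simp add: pcompose_mult Cyc_comp[of m 1 p, unfolded Cyc_1, symmetric] Cyc_comp Cyc_def[symmetric])
qed

lemma cyc_one: "cyclotomic 1 = [:-1, 1:]"
proof -
  have "{k\<in>{1..1::nat}. coprime k 1} = {1}" by auto
  thus ?thesis by (simp add: cyclotomic_def)
qed

lemma Cyc_prime:
  assumes "prime p"
  shows "Cyc p e * (1 - monom 1 e) = 1 - monom 1 (p*e)"
proof -
  have c1: "Cyc 1 d = monom 1 d - 1" for d
    unfolding Cyc_def cyc_one by (simp add: pcompose_pCons one_pCons)
  have "Cyc (1*p) e * Cyc 1 e = Cyc 1 (p*e)"
    by (rule Cyc_rel) (use assms in \<open>auto simp: prime_gt_1_nat\<close>)
  hence "Cyc p e * (monom 1 e - 1) = monom 1 (p*e) - 1" by (simp only: mult_1 c1)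
  hence "- (Cyc p e * (monom 1 e - 1)) = - (monom 1 (p*e) - 1)" by simp
  thus ?thesis by (simp add: algebra_simps)
qed

lemma cyclotomic_nz: "cyclotomic m \<noteq> 0"
  by (simp add: cyclotomic_def)

lemma Cyc_nz: "e > 0 \<Longrightarrow> Cyc m e \<noteq> 0"
  unfolding Cyc_def using pcompose_eq_0[of "cyclotomic m" "monom 1 e"] cyclotomic_nz
  by (auto simp: degree_monom_eq)

lemma one_minus_nz: "e > 0 \<Longrightarrow> 1 - monom (1::complex) e \<noteq> 0"
proof
  assume "e > 0" "1 - monom (1::complex) e = 0"
  hence "coeff (1 - monom (1::complex) e) 0 = 0" by simp
  thus False using \<open>e > 0\<close> by (simp add: coeff_monom)
qed

definition nn :: "(nat \<Rightarrow> nat) \<Rightarrow> nat \<Rightarrow> nat" where "nn p j = (\<Prod>l=1..j. p l)"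
definition NN :: "(nat \<Rightarrow> nat) \<Rightarrow> nat \<Rightarrow> nat \<Rightarrow> nat" where "NN p k j = (\<Prod>l=Suc j..k. p l)"
definition TT where "TT p k j = (\<Prod>i=Suc j..k. Cyc (nn p j) (NN p k j div p i))"
definition UU where "UU p k j = Cyc (nn p j) (NN p k j)"
definition PP where "PP p k j = (\<Prod>i=Suc (Suc j)..k. Cyc (nn p j) (NN p k (Suc j) div p i))"

locale primes =
  fixes p :: "nat \<Rightarrow> nat" and k :: nat
  assumes pr: "\<forall>i\<in>{1..k}. prime (p i)" and inj: "inj_on p {1..k}"
begin

lemma ppos: "1 \<le> i \<Longrightarrow> i \<le> k \<Longrightarrow> p i > 0"
  using pr prime_gt_0_nat by auto

lemma nn_pos: "j \<le> k \<Longrightarrow> nn p j > 0"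
  unfolding nn_def by (intro prod_pos) (auto intro: ppos)

lemma NN_pos: "NN p k j > 0"
  unfolding NN_def by (intro prod_pos) (auto intro: ppos)

lemma nn_Suc: "nn p (Suc j) = nn p j * p (Suc j)"
  unfolding nn_def by simp

lemma NN_Suc: "j < k \<Longrightarrow> NN p k j = p (Suc j) * NN p k (Suc j)"
  unfolding NN_def by (subst prod.atLeast_Suc_atMost) auto

lemma dvdNN: "Suc j \<le> i \<Longrightarrow> i \<le> k \<Longrightarrow> p i dvd NN p k j"
  unfolding NN_def by (intro dvd_prodI) auto

lemma ndvd: "j < k \<Longrightarrow> \<not> p (Suc j) dvd nn p j"
proof
  assume j: "j < k" and d: "p (Suc j) dvd nn p j"
  have pj: "prime (p (Suc j))" using pr[rule_format, of "Suc j"] j by simp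
  have "p (Suc j) dvd prod p {1..j}" using d by (simp only: nn_def)
  hence "\<exists>l\<in>{1..j}. p (Suc j) dvd p l"
    using prime_dvd_prod_iff[OF _ pj, of "{1..j}" p] by simp
  then obtain l where l: "l \<in> {1..j}" "p (Suc j) dvd p l" by blast
  have lk: "l \<in> {1..k}" using l j by simp
  have pl: "prime (p l)" using pr[rule_format, OF lk] .
  have "p (Suc j) = p l" by (rule primes_dvd_imp_eq[OF pj pl l(2)])
  moreover have "Suc j \<in> {1..k}" using j by simp
  ultimately have "Suc j = l" using inj_onD[OF inj] lk by blast
  thus False using l by simp
qed

lemma rec:
  assumes j: "j < k"
  shows "TT p k j * UU p k (Suc j) = TT p k (Suc j) * UU p k j * PP p k j"
proof -
  define a where "a = p (Suc j)"
  define m where "m = nn p j"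
  define I where "I = {Suc (Suc j)..k}"
  have m0: "m > 0" using nn_pos j by (simp add: m_def)
  have pa: "prime a" using pr j by (auto simp: a_def)
  have nd: "\<not> a dvd m" using ndvd[OF j] by (simp add: a_def m_def)
  have R: "Cyc (m*a) e * Cyc m e = Cyc m (a*e)" for e by (rule Cyc_rel[OF m0 pa nd])
  have NNj: "NN p k j = a * NN p k (Suc j)" using NN_Suc[OF j] by (simp add: a_def)
  have nns: "nn p (Suc j) = m * a" by (simp add: nn_Suc m_def a_def)
  define X where "X = (\<Prod>i\<in>I. Cyc m (NN p k j div p i))"
  have "TT p k j = Cyc m (NN p k j div a) * X"
    unfolding TT_def X_def I_def m_def a_def using j by (subst prod.atLeast_Suc_atMost) auto
  also have "NN p k j div a = NN p k (Suc j)"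
    using NNj pa by (simp add: prime_gt_0_nat)
  finally have T1: "TT p k j = Cyc m (NN p k (Suc j)) * X" .
  have "TT p k (Suc j) * PP p k j = (\<Prod>i\<in>I. Cyc (m*a) (NN p k (Suc j) div p i) * Cyc m (NN p k (Suc j) div p i))"
    unfolding TT_def PP_def I_def nns m_def by (simp add: prod.distrib)
  also have "\<dots> = (\<Prod>i\<in>I. Cyc m (a * (NN p k (Suc j) div p i)))" by (simp only: R)
  also have "\<dots> = X" unfolding X_def
  proof (intro prod.cong refl)
    fix i assume i: "i \<in> I"
    have "p i dvd NN p k (Suc j)" using i by (intro dvdNN) (auto simp: I_def)
    hence "a * (NN p k (Suc j) div p i) = NN p k j div p i"
      by (simp add: NNj div_mult_swap)
    thus "Cyc m (a * (NN p k (Suc j) div p i)) = Cyc m (NN p k j div p i)" by simp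
  qed
  finally have T2: "TT p k (Suc j) * PP p k j = X" .
  have U: "UU p k (Suc j) * Cyc m (NN p k (Suc j)) = UU p k j"
    unfolding UU_def nns using R[of "NN p k (Suc j)"] by (simp add: NNj m_def)
  have "TT p k j * UU p k (Suc j) = (UU p k (Suc j) * Cyc m (NN p k (Suc j))) * X"
    by (simp add: T1 ac_simps)
  also have "\<dots> = UU p k j * (TT p k (Suc j) * PP p k j)" by (simp add: U T2)
  finally show ?thesis by (simp add: ac_simps)
qed

lemma claim_aux:
  "\<forall>j. k - j = d \<longrightarrow> 1 \<le> j \<longrightarrow> j \<le> k \<longrightarrow>
     TT p k j * cyclotomic (nn p k) = UU p k j * (\<Prod>l=j..k-1. PP p k l)"
proof (induction d)
  case 0
  show ?case
  proof (intro allI impI)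
    fix j assume "k - j = 0" "1 \<le> j" "j \<le> k"
    hence jk: "j = k" by simp
    have "NN p k k = 1" by (simp add: NN_def)
    thus "TT p k j * cyclotomic (nn p k) = UU p k j * (\<Prod>l=j..k-1. PP p k l)"
      using jk \<open>1 \<le> j\<close> Cyc_1[of "nn p k"] by (simp add: TT_def UU_def)
  qed
next
  case (Suc d)
  show ?case
  proof (intro allI impI)
    fix j assume h: "k - j = Suc d" "1 \<le> j" "j \<le> k"
    hence j: "j < k" by simp
    have IH: "TT p k (Suc j) * cyclotomic (nn p k) = UU p k (Suc j) * (\<Prod>l=Suc j..k-1. PP p k l)"
      using Suc.IH h j by auto
    have pr2: "(\<Prod>l=j..k-1. PP p k l) = PP p k j * (\<Prod>l=Suc j..k-1. PP p k l)"
      using j by (subst prod.atLeast_Suc_atMost) auto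
    have nz: "UU p k (Suc j) \<noteq> 0" unfolding UU_def by (rule Cyc_nz[OF NN_pos])
    have "(TT p k j * cyclotomic (nn p k)) * UU p k (Suc j) =
          (UU p k j * (\<Prod>l=j..k-1. PP p k l)) * UU p k (Suc j)"
    proof -
      have "(TT p k j * cyclotomic (nn p k)) * UU p k (Suc j) = (TT p k j * UU p k (Suc j)) * cyclotomic (nn p k)"
        by (simp add: ac_simps)
      also have "\<dots> = UU p k j * PP p k j * (TT p k (Suc j) * cyclotomic (nn p k))"
        by (simp add: rec[OF j] ac_simps)
      also have "\<dots> = UU p k j * PP p k j * (UU p k (Suc j) * (\<Prod>l=Suc j..k-1. PP p k l))"
        by (simp only: IH)
      also have "\<dots> = (UU p k j * (PP p k j * (\<Prod>l=Suc j..k-1. PP p k l))) * UU p k (Suc j)"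
        by (simp only: ac_simps)
      also have "\<dots> = (UU p k j * (\<Prod>l=j..k-1. PP p k l)) * UU p k (Suc j)"
        by (simp only: pr2)
      finally show ?thesis .
    qed
    thus "TT p k j * cyclotomic (nn p k) = UU p k j * (\<Prod>l=j..k-1. PP p k l)"
      using nz by simp
  qed
qed

lemma claim1:
  assumes "k \<ge> 1"
  shows "TT p k 1 * cyclotomic (nn p k) = UU p k 1 * (\<Prod>l=1..k-1. PP p k l)"
  using claim_aux[of "k - 1"] assms by simp

end

theorem lemma1:
  fixes k :: nat and p :: "nat \<Rightarrow> nat"
  assumes "k \<ge> 2"
    and "\<forall>i\<in>{1..k}. prime (p i)"
    and "inj_on p {1..k}"
  shows "(let n = (\<Prod>i=1..k. p i);
              f = to_fract (1 - X_pow n)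
                  * to_fract (\<Prod>i=2..k. 1 - X_pow ((\<Prod>l=2..k. p l) div p i))
                  / to_fract (\<Prod>i=1..k. 1 - X_pow (n div p i));
              P = (\<lambda>j. \<Prod>i=j+2..k. pcompose (cyclotomic (\<Prod>l=1..j. p l))
                                             (X_pow ((\<Prod>l=j+2..k. p l) div p i)))
          in to_fract (cyclotomic n) = f * to_fract (\<Prod>j=1..k-2. P j))"
proof -
  interpret primes p k using assms(2,3) by unfold_locales
  define n where "n = (\<Prod>i=1..k. p i)"
  define Q where "Q = (\<Prod>l=2..k. p l)"
  define P where "P = (\<lambda>j. \<Prod>i=j+2..k. pcompose (cyclotomic (\<Prod>l=1..j. p l))
                                             (X_pow ((\<Prod>l=j+2..k. p l) div p i)))"
  define E where "E = (\<Prod>i=2..k. 1 - X_pow (Q div p i))"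
  define Cden where "Cden = (\<Prod>i=1..k. 1 - X_pow (n div p i))"
  have k1: "k \<ge> 1" using assms(1) by simp
  have p1: "prime (p 1)" using assms(2) k1 by simp
  have nnk: "nn p k = n" by (simp add: nn_def n_def)
  have nn1: "nn p 1 = p 1" by (simp add: nn_def)
  have NN1: "NN p k 1 = Q" by (simp add: NN_def Q_def numeral_2_eq_2)
  have nQ: "n = p 1 * Q"
  proof -
    have "NN p k 0 = p (Suc 0) * NN p k (Suc 0)" using NN_Suc[of 0] k1 by simp
    moreover have "NN p k 0 = n" by (simp add: NN_def n_def)
    ultimately show ?thesis using NN1 by simp
  qed
  have p1pos: "p 1 > 0" using p1 prime_gt_0_nat by blast
  have Qpos: "Q > 0" using NN_pos[of 1] NN1 by simp
  have dvQ: "p i dvd Q" if "i \<in> {2..k}" for i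
    using dvdNN[of 1 i] that NN1 by auto
  have H1: "TT p k 1 * E = (\<Prod>i=2..k. 1 - X_pow (n div p i))"
  proof -
    have "TT p k 1 * E = (\<Prod>i=2..k. Cyc (p 1) (Q div p i) * (1 - X_pow (Q div p i)))"
      unfolding TT_def E_def nn1 NN1 by (simp add: prod.distrib numeral_2_eq_2)
    also have "\<dots> = (\<Prod>i=2..k. 1 - X_pow (n div p i))"
    proof (intro prod.cong refl)
      fix i assume i: "i \<in> {2..k}"
      have "p 1 * (Q div p i) = n div p i" using dvQ[OF i] nQ by (simp add: div_mult_swap)
      thus "Cyc (p 1) (Q div p i) * (1 - X_pow (Q div p i)) = 1 - X_pow (n div p i)"
        using Cyc_prime[OF p1] by metis
    qed
    finally show ?thesis .
  qed
  have H2: "UU p k 1 * (1 - X_pow Q) = 1 - X_pow n"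
    unfolding UU_def nn1 NN1 nQ by (rule Cyc_prime[OF p1])
  have H3: "Cden = (1 - X_pow Q) * (\<Prod>i=2..k. 1 - X_pow (n div p i))"
  proof -
    have "Cden = (1 - X_pow (n div p 1)) * (\<Prod>i=Suc 1..k. 1 - X_pow (n div p i))"
      unfolding Cden_def using k1 by (subst prod.atLeast_Suc_atMost) auto
    moreover have "n div p 1 = Q" using nQ p1pos by simp
    ultimately show ?thesis by (simp add: numeral_2_eq_2)
  qed
  have C1: "TT p k 1 * cyclotomic n = UU p k 1 * (\<Prod>l=1..k-1. PP p k l)"
    using claim1[OF k1] nnk by simp
  have PPP: "PP p k l = P l" for l
    by (simp add: PP_def P_def Cyc_def nn_def NN_def)
  have H4: "(\<Prod>l=1..k-1. PP p k l) = (\<Prod>j=1..k-2. P j)"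
  proof -
    have km: "k - 1 = Suc (k - 2)" using assms(1) by simp
    have pk: "PP p k (Suc (k-2)) = 1" using assms(1) by (simp add: PP_def)
    have "(\<Prod>l=1..Suc (k-2). PP p k l) = (\<Prod>l=1..k-2. PP p k l) * PP p k (Suc (k-2))"
      by simp
    hence "(\<Prod>l=1..k-1. PP p k l) = (\<Prod>l=1..k-2. PP p k l)"
      unfolding km pk by simp
    thus ?thesis by (simp add: PPP)
  qed
  have poly_id: "cyclotomic n * Cden = (1 - X_pow n) * E * (\<Prod>j=1..k-2. P j)"
  proof -
    have "cyclotomic n * Cden = cyclotomic n * ((1 - X_pow Q) * (TT p k 1 * E))"
      by (simp only: H3 H1)
    also have "\<dots> = (TT p k 1 * cyclotomic n) * (1 - X_pow Q) * E"
      by (simp only: ac_simps)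
    also have "\<dots> = (UU p k 1 * (\<Prod>l=1..k-1. PP p k l)) * (1 - X_pow Q) * E"
      by (simp only: C1)
    also have "\<dots> = (UU p k 1 * (1 - X_pow Q)) * E * (\<Prod>l=1..k-1. PP p k l)"
      by (simp only: ac_simps)
    finally show ?thesis by (simp only: H2 H4)
  qed
  have npos: "n > 0" using nQ p1pos Qpos by simp
  have Cnz: "Cden \<noteq> 0"
  proof -
    have "1 - X_pow (n div p i) \<noteq> 0" if i: "i \<in> {1..k}" for i
    proof -
    have "p i dvd n" unfolding n_def using i by (intro dvd_prodI) auto
    hence "p i \<le> n" using npos by (rule dvd_imp_le)
    hence "n div p i > 0" using ppos[of i] i by (simp add: div_greater_zero_iff)
    thus "1 - X_pow (n div p i) \<noteq> 0" by (rule one_minus_nz)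
    qed
    thus ?thesis unfolding Cden_def by (subst prod_zero_iff) auto
  qed
  have main: "to_fract (cyclotomic n) = to_fract (1 - X_pow n) * to_fract E / to_fract Cden * to_fract (\<Prod>j=1..k-2. P j)"
  proof -
    have "to_fract (cyclotomic n) * to_fract Cden = to_fract (1 - X_pow n) * to_fract E * to_fract (\<Prod>j=1..k-2. P j)"
      using arg_cong[OF poly_id, of to_fract] by (simp only: to_fract_mult)
    moreover have "to_fract Cden \<noteq> 0" using Cnz by simp
    ultimately show ?thesis by (simp add: field_simps)
  qed
  show ?thesis using main unfolding Let_def n_def Q_def E_def Cden_def P_def .
qed

end
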